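(* Let $M$ be a perfect matching for a self-contained finite bipartite graph $\mathcal{B}=\langle V,F,E\rangle$. Let $S_V^{(1)},\dots,S_V^{(n)}$ be a topological ordering of the strongly connected components of the directed graph $\mathcal{G}(\mathcal{B},M)_{\mathrm{mar}(F)}$, and for $i=1,\dots,n$ let $\mathcal{B}^{(i)}$ be the subgraph of $\mathcal{B}$ induced by $\bigcup_{j=i}^{n}(S_V^{(j)}\cup M(S_V^{(j)}))$. Then $\mathcal{B}^{(i)}$ is self-contained and $M(S_V^{(i)})$ is a minimal self-contained set in $\mathcal{B}^{(i)}$.
   Context: $\mathrm{adj}_{\mathcal{B}}(X)$ is the set of vertices adjacent to some vertex of $X$. A set $F'\subseteq F$ is self-contained in $\mathcal{B}$ if $|F'|=|\mathrm{adj}_{\mathcal{B}}(F')|$ and $|F''|\le|\mathrm{adj}_{\mathcal{B}}(F'')|$ for all $F''\subseteq F'$; a bipartite graph is self-contained if both its sides have equal size and its constraint side is self-contained; a non-empty self-contained set is minimal self-contained if no non-empty strict subset is self-contained. For a matching $M$ and vertex set $X$, $M(X)$ is the set of vertices matched to vertices of $X$. $\mathcal{G}(\mathcal{B},M)$ is the directed graph on $V\cup F$ with, for each $(v-f)\in E$, the edge $f\to v$ if $(v-f)\in M$ and $v\to f$ otherwise. $\mathcal{G}(\mathcal{B},M)_{\mathrm{mar}(F)}$ is the graph on $V$ with $x\to y$ iff $\mathcal{G}(\mathcal{B},M)$ has a directed path from $x$ to $y$ whose intermediate vertices all lie in $F$. A topological ordering of the strongly connected components means an ordering such that every edge between two distinct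 components goes from an earlier to a later component. *)

theory Defs
  imports Main
begin

definition bipartite_graph :: "'v set \<Rightarrow> 'f set \<Rightarrow> ('v \<times> 'f) set \<Rightarrow> bool" where
  "bipartite_graph V F E \<longleftrightarrow> finite V \<and> finite F \<and> E \<subseteq> V \<times> F"

definition adj :: "('v \<times> 'f) set \<Rightarrow> 'f set \<Rightarrow> 'v set" where
  "adj E X = {v. \<exists>f\<in>X. (v, f) \<in> E}"

definition self_contained_set :: "'f set \<Rightarrow> ('v \<times> 'f) set \<Rightarrow> 'f set \<Rightarrow> bool" where
  "self_contained_set F E F' \<longleftrightarrow> F' \<subseteq> F \<and> card F' = card (adj E F') \<and>
     (\<forall>F''. F'' \<subseteq> F' \<longrightarrow> card F'' \<le> card (adj E F''))"

definition self_contained_graph :: "'v set \<Rightarrow> 'f set \<Rightarrow> ('v \<times> 'f) set \<Rightarrow> bool" where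
  "self_contained_graph V F E \<longleftrightarrow> card V = card F \<and> self_contained_set F E F"

definition minimal_self_contained :: "'f set \<Rightarrow> ('v \<times> 'f) set \<Rightarrow> 'f set \<Rightarrow> bool" where
  "minimal_self_contained F E F' \<longleftrightarrow> F' \<noteq> {} \<and> self_contained_set F E F' \<and>
     (\<forall>F''. F'' \<noteq> {} \<and> F'' \<subset> F' \<longrightarrow> \<not> self_contained_set F E F'')"

definition perfect_matching :: "'v set \<Rightarrow> 'f set \<Rightarrow> ('v \<times> 'f) set \<Rightarrow> ('v \<times> 'f) set \<Rightarrow> bool" where
  "perfect_matching V F E M \<longleftrightarrow> M \<subseteq> E \<and>
     (\<forall>v\<in>V. \<exists>!f. (v, f) \<in> M) \<and> (\<forall>f\<in>F. \<exists>!v. (v, f) \<in> M)"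

definition matched :: "('v \<times> 'f) set \<Rightarrow> 'v set \<Rightarrow> 'f set" where
  "matched M X = {f. \<exists>v\<in>X. (v, f) \<in> M}"

definition orient_graph :: "('v \<times> 'f) set \<Rightarrow> ('v \<times> 'f) set \<Rightarrow> ('v + 'f) rel" where
  "orient_graph E M =
     {(Inr f, Inl v) | v f. (v, f) \<in> E \<and> (v, f) \<in> M} \<union>
     {(Inl v, Inr f) | v f. (v, f) \<in> E \<and> (v, f) \<notin> M}"

definition mar_graph :: "('v \<times> 'f) set \<Rightarrow> ('v \<times> 'f) set \<Rightarrow> 'v rel" where
  "mar_graph E M = {(x, y). \<exists>fs. (\<forall>z\<in>set fs. z \<in> range Inr) \<and>
       successively (\<lambda>a b. (a, b) \<in> orient_graph E M) (Inl x # fs @ [Inl y])}"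

definition sccs :: "'v set \<Rightarrow> 'v rel \<Rightarrow> 'v set set" where
  "sccs V R = {C. \<exists>x\<in>V. C = {y\<in>V. (x, y) \<in> (R \<inter> V \<times> V)\<^sup>* \<and> (y, x) \<in> (R \<inter> V \<times> V)\<^sup>*}}"

(* S is a topological ordering (list, 0-indexed) of the SCCs *)
definition topological_scc_ordering :: "'v set \<Rightarrow> 'v rel \<Rightarrow> 'v set list \<Rightarrow> bool" where
  "topological_scc_ordering V R S \<longleftrightarrow> distinct S \<and> set S = sccs V R \<and>
     (\<forall>i<length S. \<forall>j<length S. \<forall>x y. x \<in> S ! i \<and> y \<in> S ! j \<and> (x, y) \<in> R \<and> i \<noteq> j
        \<longrightarrow> i < j)"

end

theory Submission
  imports Defs
begin

lemma mar_iff: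
  assumes ME: "M \<subseteq> E"
  shows "(x,y) \<in> mar_graph E M \<longleftrightarrow> (\<exists>f. (x,f)\<in>E \<and> (x,f)\<notin>M \<and> (y,f)\<in>M)"
proof
  assume "(x,y) \<in> mar_graph E M"
  then obtain fs where fs: "\<forall>z\<in>set fs. z \<in> range Inr"
    "successively (\<lambda>a b. (a,b)\<in>orient_graph E M) (Inl x # fs @ [Inl y])"
    unfolding mar_graph_def by auto
  show "\<exists>f. (x,f)\<in>E \<and> (x,f)\<notin>M \<and> (y,f)\<in>M"
  proof (cases fs)
    case Nil then show ?thesis using fs by (simp add: orient_graph_def)
  next
    case (Cons a rest)
    obtain f where a: "a = Inr f" using fs Cons by auto
    have 1: "(x,f)\<in>E \<and> (x,f)\<notin>M" using fs(2) Cons a by (auto simp: orient_graph_def)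
    show ?thesis
    proof (cases rest)
      case Nil
      then have "(y,f)\<in>M" using fs(2) Cons a by (auto simp: orient_graph_def)
      then show ?thesis using 1 by blast
    next
      case (Cons b rest')
      obtain g where "b = Inr g" using fs Cons \<open>fs = a # rest\<close> by auto
      then show ?thesis using fs(2) Cons \<open>fs = a # rest\<close> a by (simp add: orient_graph_def)
    qed
  qed
next
  assume "\<exists>f. (x,f)\<in>E \<and> (x,f)\<notin>M \<and> (y,f)\<in>M"
  then obtain f where f: "(x,f)\<in>E" "(x,f)\<notin>M" "(y,f)\<in>M" by blast
  show "(x,y) \<in> mar_graph E M"
    unfolding mar_graph_def
    apply (rule CollectI, simp only: case_prod_conv)
    apply (rule exI[of _ "[Inr f]"])
    using f ME apply (auto simp: orient_graph_def)
    done
qed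

theorem lemma40:
  fixes V :: "'v set" and F :: "'f set" and E M :: "('v \<times> 'f) set"
    and S :: "'v set list" and i :: nat
  assumes "bipartite_graph V F E"
    and "self_contained_graph V F E"
    and "perfect_matching V F E M"
    and "topological_scc_ordering V (mar_graph E M) S"
    and "i < length S"
  shows "let Vi = (\<Union>j\<in>{i..<length S}. S ! j);
             Fi = (\<Union>j\<in>{i..<length S}. matched M (S ! j));
             Ei = E \<inter> (Vi \<times> Fi)
         in self_contained_graph Vi Fi Ei \<and> minimal_self_contained Fi Ei (matched M (S ! i))"
proof -
  define Vi where "Vi = (\<Union>j\<in>{i..<length S}. S ! j)"
  define Fi where "Fi = (\<Union>j\<in>{i..<length S}. matched M (S ! j))"
  define Ei where "Ei = E \<inter> (Vi \<times> Fi)"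
  define R where "R = mar_graph E M \<inter> V \<times> V"
  have finV: "finite V" and EVF: "E \<subseteq> V \<times> F" using assms(1) by (auto simp: bipartite_graph_def)
  have ME: "M \<subseteq> E" and Mv: "\<forall>v\<in>V. \<exists>!f. (v, f) \<in> M" and Mf: "\<forall>f\<in>F. \<exists>!v. (v, f) \<in> M"
    using assms(3) by (auto simp: perfect_matching_def)
  define m where "m v = (THE f. (v,f) \<in> M)" for v
  have mM: "(v, m v) \<in> M" if "v \<in> V" for v
    unfolding m_def using Mv that by (metis theI')
  have Mm: "v \<in> V \<and> f = m v" if "(v,f) \<in> M" for v f
  proof -
    have vV: "v \<in> V" using that ME EVF by auto
    then show ?thesis using Mv mM that by blast
  qed
  have mE: "(v, m v) \<in> E" if "v \<in> V" for v using mM that ME by auto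
  have minj: "inj_on m V"
  proof (rule inj_onI)
    fix a b assume ab: "a \<in> V" "b \<in> V" "m a = m b"
    have "m a \<in> F" using mE ab EVF by auto
    then show "a = b" using Mf mM ab by metis
  qed
  have matched_eq: "matched M X = m ` X" if "X \<subseteq> V" for X
    unfolding matched_def using that mM Mm by (auto simp: image_iff) (metis subsetD)
  have top: "distinct S" "set S = sccs V (mar_graph E M)"
    "\<And>a b x y. a < length S \<Longrightarrow> b < length S \<Longrightarrow> x \<in> S ! a \<Longrightarrow> y \<in> S ! b \<Longrightarrow>
       (x, y) \<in> mar_graph E M \<Longrightarrow> a \<noteq> b \<Longrightarrow> a < b"
    using assms(4) unfolding topological_scc_ordering_def by blast+
  have Sscc: "\<exists>x\<in>V. S ! j = {y\<in>V. (x, y) \<in> R\<^sup>* \<and> (y, x) \<in> R\<^sup>*}" if "j < length S" for j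
  proof -
    have "S ! j \<in> sccs V (mar_graph E M)" using top(2) that nth_mem by metis
    then show ?thesis unfolding sccs_def R_def by blast
  qed
  have SV: "S ! j \<subseteq> V" if "j < length S" for j using Sscc[OF that] by auto
  have ViV: "Vi \<subseteq> V" unfolding Vi_def using SV by fastforce
  have finVi: "finite Vi" using ViV finV finite_subset by blast
  have SiVi: "S ! i \<subseteq> Vi" unfolding Vi_def using assms(5) by auto
  have Fi_eq: "Fi = m ` Vi" unfolding Fi_def Vi_def using matched_eq SV by auto
  have adjVi: "adj Ei X \<subseteq> Vi" for X unfolding adj_def Ei_def by auto
  have finadj: "finite (adj Ei X)" for X using adjVi finVi finite_subset by blast
  have adjI: "y \<in> adj Ei X" if "y \<in> Vi" "m y \<in> X" "X \<subseteq> Fi" for y X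
    unfolding adj_def Ei_def using that mE ViV Fi_eq by auto
  have hall: "card X \<le> card (adj Ei X)" if XF: "X \<subseteq> Fi" for X
  proof -
    have "X \<subseteq> m ` adj Ei X"
    proof
      fix f assume "f \<in> X"
      then obtain y where "y \<in> Vi" "f = m y" using XF Fi_eq by auto
      then show "f \<in> m ` adj Ei X" using adjI \<open>f \<in> X\<close> XF by auto
    qed
    then have "card X \<le> card (m ` adj Ei X)" using finadj by (simp add: card_mono)
    also have "\<dots> \<le> card (adj Ei X)" by (rule card_image_le[OF finadj])
    finally show ?thesis .
  qed
  have adjFi: "adj Ei Fi = Vi"
    using adjVi adjI Fi_eq by auto
  have cardFi: "card Fi = card Vi" unfolding Fi_eq
    using card_image minj inj_on_subset ViV by metis
  have sc1: "self_contained_graph Vi Fi Ei"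
    unfolding self_contained_graph_def self_contained_set_def
    using cardFi adjFi hall by auto
  have inS: "x \<in> S ! i" if H: "x \<in> Vi" "(x, y) \<in> mar_graph E M" "y \<in> S ! i" for x y
  proof -
    obtain j where j: "j \<in> {i..<length S}" "x \<in> S ! j" using H(1) unfolding Vi_def by auto
    have "j = i"
    proof (rule ccontr)
      assume "j \<noteq> i"
      then have "j < i" using top(3)[of j i x y] j H assms(5) by auto
      then show False using j by auto
    qed
    then show ?thesis using j by simp
  qed
  define Si where "Si = S ! i"
  have SiV: "Si \<subseteq> V" using SV assms(5) Si_def by auto
  have mSi: "matched M Si = m ` Si" using matched_eq SiV by auto
  have mSiFi: "m ` Si \<subseteq> Fi" using Fi_eq SiVi Si_def by auto
  have adjSi: "adj Ei (m ` Si) = Si"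
  proof
    show "Si \<subseteq> adj Ei (m ` Si)" using adjI SiVi mSiFi Si_def by auto
    show "adj Ei (m ` Si) \<subseteq> Si"
    proof
      fix x assume "x \<in> adj Ei (m ` Si)"
      then obtain y where y: "y \<in> Si" "(x, m y) \<in> E" "x \<in> Vi"
        unfolding adj_def Ei_def by auto
      show "x \<in> Si"
      proof (cases "x = y")
        case True then show ?thesis using y by simp
      next
        case False
        have "y \<in> V" using y SiV by auto
        then have "(x, m y) \<notin> M" using Mm False minj by (metis inj_onD)
        moreover have "(y, m y) \<in> M" using mM y SiV by auto
        ultimately have "(x, y) \<in> mar_graph E M" using mar_iff[OF ME] y by blast
        then show ?thesis using inS y Si_def by auto
      qed
    qed
  qed
  have cardSi: "card (m ` Si) = card Si" using card_image minj inj_on_subset SiV by metis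
  obtain x0 where x0: "x0 \<in> V" "Si = {y\<in>V. (x0, y) \<in> R\<^sup>* \<and> (y, x0) \<in> R\<^sup>*}"
    using Sscc assms(5) Si_def by blast
  have x0Si: "x0 \<in> Si" using x0 by auto
  have sc2: "self_contained_set Fi Ei (m ` Si)"
    unfolding self_contained_set_def using mSiFi adjSi cardSi hall by auto
  have minimal: "\<not> self_contained_set Fi Ei X" if X: "X \<noteq> {}" "X \<subset> m ` Si" for X
  proof
    assume sc: "self_contained_set Fi Ei X"
    define Y where "Y = {y \<in> Si. m y \<in> X}"
    have XY: "X = m ` Y" unfolding Y_def using X by auto
    have XFi: "X \<subseteq> Fi" using X mSiFi by auto
    have "Y \<subseteq> adj Ei X" unfolding Y_def using adjI XFi SiVi Si_def by auto
    moreover have "card (adj Ei X) = card Y"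
      using sc XY card_image minj inj_on_subset SiV unfolding self_contained_set_def Y_def
      by (metis (no_types, lifting) mem_Collect_eq subsetI subset_trans)
    ultimately have adjX: "adj Ei X = Y" using finadj by (metis card_subset_eq)
    have closed: "z \<in> Y" if "(z, y0) \<in> R\<^sup>*" "y0 \<in> Y" "z \<in> Si" for z y0
      using that
    proof (induction rule: converse_rtrancl_induct)
      case base then show ?case by simp
    next
      case (step z z')
      have "(x0, z) \<in> R\<^sup>*" using step x0 by auto
      then have "(x0, z') \<in> R\<^sup>*" using step(1) by auto
      moreover have "(z', x0) \<in> R\<^sup>*" using step(2) step(4) x0 Y_def by auto
      moreover have "z' \<in> V" using step(1) R_def by auto
      ultimately have "z' \<in> Si" using x0 by auto
      then have z'Y: "z' \<in> Y" using step by auto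
      obtain f where f: "(z,f)\<in>E" "(z',f)\<in>M" using step(1) R_def mar_iff[OF ME] by auto
      have "f = m z'" using Mm f by auto
      then have "f \<in> X" using z'Y Y_def by auto
      moreover have "z \<in> Vi" using step SiVi Si_def by auto
      ultimately have "z \<in> adj Ei X" unfolding adj_def Ei_def using f XFi by auto
      then show ?case using adjX by simp
    qed
    obtain y0 where "y0 \<in> Y" using X XY by auto
    then have "(y0, x0) \<in> R\<^sup>*" using Y_def x0 by auto
    have "Si \<subseteq> Y"
    proof
      fix z assume "z \<in> Si"
      then have "(z, x0) \<in> R\<^sup>*" "(x0, y0) \<in> R\<^sup>*" using x0 \<open>y0 \<in> Y\<close> Y_def by auto
      then have "(z, y0) \<in> R\<^sup>*" by auto
      then show "z \<in> Y" using closed \<open>y0 \<in> Y\<close> \<open>z \<in> Si\<close> by blast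
    qed
    then have "m ` Si \<subseteq> X" using XY by auto
    then show False using X by auto
  qed
  have "minimal_self_contained Fi Ei (matched M (S ! i))"
    unfolding minimal_self_contained_def using sc2 minimal x0Si mSi Si_def by auto
  then show ?thesis using sc1 unfolding Vi_def Fi_def Ei_def Let_def by simp
qed

end
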